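(* Assume the standing assumptions of the context. For every finite non-void $\mathit{\Lambda}\subset\mathsf{V}$ and every bounded continuous $f:\mathit{\Omega}\to\mathbb{R}$, the function $\xi\mapsto\pi_{\mathit{\Lambda}}(f|\xi)=\int_{\mathit{\Omega}}f(\omega)\pi_{\mathit{\Lambda}}(d\omega|\xi)$ is bounded and continuous on $\mathit{\Omega}$.
   Context: $\mathsf{G}=(\mathsf{V},\mathsf{E})$ is a countable, connected, locally finite undirected graph; $n(x)$ the degree, $\rho$ the path distance, $o$ a fixed root, $w_\alpha(x)=e^{-\alpha\rho(o,x)}$, $\mathit{\Theta}(\alpha,\theta)=\sum_x\sum_{y\sim x}[n(x)n(y)]^\theta w_\alpha(x)$. Standing assumptions: $\theta>0$ fixed with $\mathit{\Theta}(\alpha,\theta)<\infty$ for some $\alpha>0$; $W:\mathbb{R}^2\to\mathbb{R}$ continuous, symmetric, $|W(u,v)|\le[I_W+J_W(|u|^r+|v|^r)]/2$ ($I_W,J_W,r>0$); $V:\mathbb{R}\to\mathbb{R}$ continuous with $V(u)\ge a_V|u|^q-c_V$ ($a_V,c_V>0$, $q>r+r/\theta$). $\mathit{\Omega}=\mathbb{R}^{\mathsf{V}}$ with the product topology. For finite non-void $\mathit{\Lambda}$ and $\xi\in\mathit{\Omega}$: $H_{\mathit{\Lambda}}(\omega_{\mathit{\Lambda}}|\xi)=\sum_{\langle x,y\rangle\in\mathsf{E}:x,y\in\mathit{\Lambda}}W(\omega(x),\omega(y))+\sum_{\langle x,y\rangle\in\mathsf{E}:x\in\mathit{\Lambda},y\notin\mathit{\Lambda}}W(\omega(x),\xi(y))+\sum_{x\in\mathit{\Lambda}}V(\omega(x))$,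 $\pi_{\mathit{\Lambda}}(A|\xi)=Z_{\mathit{\Lambda}}(\xi)^{-1}\int_{\mathbb{R}^{\mathit{\Lambda}}}\mathbb{I}_A(\omega_{\mathit{\Lambda}}\times\xi_{\mathit{\Lambda}^c})e^{-H_{\mathit{\Lambda}}(\omega_{\mathit{\Lambda}}|\xi)}d\omega_{\mathit{\Lambda}}$, $Z_{\mathit{\Lambda}}(\xi)$ normalizing. *)

theory Defs
  imports "HOL-Analysis.Analysis"
begin

definition edge_rel :: "('v \<Rightarrow> 'v \<Rightarrow> bool) \<Rightarrow> ('v \<times> 'v) set" where
  "edge_rel E = {(x, y). E x y}"

definition degree :: "('v \<Rightarrow> 'v \<Rightarrow> bool) \<Rightarrow> 'v \<Rightarrow> nat" where
  "degree E x = card {y. E x y}"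

definition path_dist :: "('v \<Rightarrow> 'v \<Rightarrow> bool) \<Rightarrow> 'v \<Rightarrow> 'v \<Rightarrow> nat" where
  "path_dist E x y = (LEAST k. (x, y) \<in> edge_rel E ^^ k)"

definition graph_ok :: "('v \<Rightarrow> 'v \<Rightarrow> bool) \<Rightarrow> bool" where
  "graph_ok E \<longleftrightarrow> countable (UNIV :: 'v set)
     \<and> (\<forall>x y. E x y \<longrightarrow> E y x) \<and> (\<forall>x. \<not> E x x)
     \<and> (\<forall>x. finite {y. E x y})
     \<and> (\<forall>x y. (x, y) \<in> (edge_rel E)\<^sup>*)"

definition weight :: "('v \<Rightarrow> 'v \<Rightarrow> bool) \<Rightarrow> 'v \<Rightarrow> real \<Rightarrow> 'v \<Rightarrow> real" where
  "weight E o\<^sub>0 \<alpha> x = exp (- \<alpha> * real (path_dist E o\<^sub>0 x))"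

text \<open>Theta(alpha, theta) < infinity, expressed as summability of the nonnegative
  family x \<mapsto> sum over neighbours y of [n(x) n(y)]^theta w_alpha(x).\<close>
definition Theta_finite :: "('v \<Rightarrow> 'v \<Rightarrow> bool) \<Rightarrow> 'v \<Rightarrow> real \<Rightarrow> real \<Rightarrow> bool" where
  "Theta_finite E o\<^sub>0 \<alpha> \<theta> \<longleftrightarrow>
     (\<lambda>x. \<Sum>y\<in>{y. E x y}. (real (degree E x) * real (degree E y)) powr \<theta> * weight E o\<^sub>0 \<alpha> x)
       summable_on UNIV"

definition concat_cfg :: "'v set \<Rightarrow> ('v \<Rightarrow> real) \<Rightarrow> ('v \<Rightarrow> real) \<Rightarrow> 'v \<Rightarrow> real" where
  "concat_cfg \<Lambda> \<omega> \<xi> = (\<lambda>x. if x \<in> \<Lambda> then \<omega> x else \<xi> x)"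

text \<open>Local Hamiltonian. The sum over unordered edges inside Lambda is written as half
  the sum over ordered pairs (W is symmetric).\<close>
definition hamiltonian ::
  "('v \<Rightarrow> 'v \<Rightarrow> bool) \<Rightarrow> (real \<Rightarrow> real \<Rightarrow> real) \<Rightarrow> (real \<Rightarrow> real) \<Rightarrow> 'v set
     \<Rightarrow> ('v \<Rightarrow> real) \<Rightarrow> ('v \<Rightarrow> real) \<Rightarrow> real" where
  "hamiltonian E W V \<Lambda> \<omega> \<xi> =
     (\<Sum>(x, y)\<in>{(x, y). x \<in> \<Lambda> \<and> y \<in> \<Lambda> \<and> E x y}. W (\<omega> x) (\<omega> y)) / 2
     + (\<Sum>(x, y)\<in>{(x, y). x \<in> \<Lambda> \<and> y \<notin> \<Lambda> \<and> E x y}. W (\<omega> x) (\<xi> y))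
     + (\<Sum>x\<in>\<Lambda>. V (\<omega> x))"

definition partition_fn ::
  "('v \<Rightarrow> 'v \<Rightarrow> bool) \<Rightarrow> (real \<Rightarrow> real \<Rightarrow> real) \<Rightarrow> (real \<Rightarrow> real) \<Rightarrow> 'v set
     \<Rightarrow> ('v \<Rightarrow> real) \<Rightarrow> real" where
  "partition_fn E W V \<Lambda> \<xi> =
     (\<integral>\<omega>. exp (- hamiltonian E W V \<Lambda> \<omega> \<xi>) \<partial>(PiM \<Lambda> (\<lambda>_. lborel)))"

definition local_gibbs ::
  "('v \<Rightarrow> 'v \<Rightarrow> bool) \<Rightarrow> (real \<Rightarrow> real \<Rightarrow> real) \<Rightarrow> (real \<Rightarrow> real) \<Rightarrow> 'v set
     \<Rightarrow> (('v \<Rightarrow> real) \<Rightarrow> real) \<Rightarrow> ('v \<Rightarrow> real) \<Rightarrow> real" where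
  "local_gibbs E W V \<Lambda> f \<xi> =
     (\<integral>\<omega>. f (concat_cfg \<Lambda> \<omega> \<xi>) * exp (- hamiltonian E W V \<Lambda> \<omega> \<xi>) \<partial>(PiM \<Lambda> (\<lambda>_. lborel)))
     / partition_fn E W V \<Lambda> \<xi>"

end

theory Submission
  imports Defs "HOL-Probability.Sinc_Integral"
begin

lemma seq_cont_countable:
  fixes F :: "('v \<Rightarrow> real) \<Rightarrow> real"
  assumes cnt: "countable (UNIV::'v set)"
    and seq: "\<And>X \<xi>. X \<longlonglongrightarrow> \<xi> \<Longrightarrow> (\<lambda>n. F (X n)) \<longlonglongrightarrow> F \<xi>"
  shows "continuous_on UNIV F"
proof -
  obtain tn :: "'v \<Rightarrow> nat" where inj: "inj tn" using cnt by (auto simp: countable_def)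
  define \<Phi> :: "('v \<Rightarrow> real) \<Rightarrow> (nat \<Rightarrow> real)" where "\<Phi> = (\<lambda>\<xi> n. \<xi> (inv tn n))"
  define \<Psi> :: "(nat \<Rightarrow> real) \<Rightarrow> ('v \<Rightarrow> real)" where "\<Psi> = (\<lambda>\<eta> x. \<eta> (tn x))"
  have PP: "\<Psi> (\<Phi> \<xi>) = \<xi>" for \<xi> unfolding \<Phi>_def \<Psi>_def using inj by auto
  have cPhi: "continuous_on UNIV \<Phi>" unfolding \<Phi>_def
    by (intro continuous_on_coordinatewise_then_product) simp
  have cPsi: "continuous_on UNIV \<Psi>" unfolding \<Psi>_def
    by (intro continuous_on_coordinatewise_then_product) simp
  have cG: "continuous_on UNIV (F \<circ> \<Psi>)"
  proof (rule continuous_on_sequentiallyI)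
    fix u :: "nat \<Rightarrow> nat \<Rightarrow> real" and a assume "u \<longlonglongrightarrow> a"
    then have "(\<lambda>n. \<Psi> (u n)) \<longlonglongrightarrow> \<Psi> a"
      using cPsi continuous_on_tendsto_compose[OF cPsi, of u a sequentially] by simp
    then show "(\<lambda>n. (F \<circ> \<Psi>) (u n)) \<longlonglongrightarrow> (F \<circ> \<Psi>) a" using seq by simp
  qed
  have "continuous_on UNIV ((F \<circ> \<Psi>) \<circ> \<Phi>)"
    by (rule continuous_on_compose[OF cPhi]) (use cG in \<open>auto intro: continuous_on_subset\<close>)
  moreover have "(F \<circ> \<Psi>) \<circ> \<Phi> = F" using PP by auto
  ultimately show ?thesis by simp
qed


lemma meas_of_cont:
  fixes g :: "('v \<Rightarrow> real) \<Rightarrow> real"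
  assumes fin: "finite \<Lambda>" and cg: "continuous_on UNIV g"
  shows "g \<in> borel_measurable (PiM \<Lambda> (\<lambda>_. lborel))"
proof -
  obtain e where be: "bij_betw e {0..<card \<Lambda>} \<Lambda>" using ex_bij_betw_nat_finite[OF fin] by blast
  define n where "n = card \<Lambda>"
  define d where "d = the_inv_into {0..<n} e"
  have ed: "x \<in> \<Lambda> \<Longrightarrow> e (d x) = x" and dlt: "x \<in> \<Lambda> \<Longrightarrow> d x < n" for x
    using be unfolding d_def n_def bij_betw_def
    by (auto simp: f_the_inv_into_f the_inv_into_into[of e "{0..<card \<Lambda>}" x "{0..<card \<Lambda>}", simplified] dest: the_inv_into_into)
  define T :: "('v \<Rightarrow> real) \<Rightarrow> nat \<Rightarrow> real" where "T = (\<lambda>\<omega> i. if i < n then \<omega> (e i) else 0)"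
  define h :: "(nat \<Rightarrow> real) \<Rightarrow> real" where "h = (\<lambda>\<eta>. g (\<lambda>x. if x \<in> \<Lambda> then \<eta> (d x) else undefined))"
  have Tm: "T \<in> measurable (PiM \<Lambda> (\<lambda>_. lborel)) (PiM UNIV (\<lambda>_. borel))"
    unfolding T_def
  proof (rule measurable_PiM_single')
    fix i :: nat
    show "(\<lambda>\<omega>. if i < n then \<omega> (e i) else 0) \<in> measurable (PiM \<Lambda> (\<lambda>_. lborel)) borel"
    proof (cases "i < n")
      case True
      then have "e i \<in> \<Lambda>" using be unfolding n_def bij_betw_def by auto
      then show ?thesis using True by (simp add: measurable_component_singleton[of "e i" \<Lambda> "\<lambda>_. lborel", simplified])
    qed simp
  qed simp
  have ch: "continuous_on UNIV h" unfolding h_def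
    by (rule continuous_on_compose2[OF cg]) (intro continuous_on_coordinatewise_then_product, case_tac "i \<in> \<Lambda>", auto)
  have hm: "h \<in> borel_measurable (PiM UNIV (\<lambda>_::nat. borel))"
    using borel_measurable_continuous_onI[OF ch] sets_PiM_equal_borel measurable_cong_sets by blast
  have "(\<lambda>\<omega>. h (T \<omega>)) \<in> borel_measurable (PiM \<Lambda> (\<lambda>_. lborel))"
    using measurable_compose[OF Tm hm] .
  moreover have "h (T \<omega>) = g \<omega>" if "\<omega> \<in> space (PiM \<Lambda> (\<lambda>_. lborel))" for \<omega>
  proof -
    have "(\<lambda>x. if x \<in> \<Lambda> then T \<omega> (d x) else undefined) = \<omega>"
      using that ed dlt by (auto simp: T_def space_PiM PiE_def extensional_def)
    then show ?thesis by (simp add: h_def)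
  qed
  ultimately show ?thesis using measurable_cong by (smt (verit))
qed


lemma powr_absorb:
  fixes K a r q :: real
  assumes "K \<ge> 0" "a > 0" "0 < r" "r < q"
  shows "\<exists>C. \<forall>s\<ge>0. K * s powr r \<le> a / 2 * s powr q + C"
proof -
  define S where "S = max 1 ((2*K/a) powr (1/(q-r)))"
  have S1: "S \<ge> 1" by (simp add: S_def)
  have "K * s powr r \<le> a / 2 * s powr q + K * S powr r" if "s \<ge> 0" for s
  proof (cases "s \<le> S")
    case True
    then have "s powr r \<le> S powr r" using that assms by (intro powr_mono2) auto
    then have "K * s powr r \<le> K * S powr r" using assms by (simp add: mult_left_mono)
    moreover have "0 \<le> a / 2 * s powr q" using assms by simp
    ultimately show ?thesis by linarith
  next
    case False
    then have sp: "s > 0" using S1 by linarith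
    have "2*K/a \<le> ((2*K/a) powr (1/(q-r))) powr (q-r)"
      using assms by (simp add: powr_powr)
    also have "\<dots> \<le> S powr (q-r)" using assms by (intro powr_mono2) (auto simp: S_def)
    also have "\<dots> \<le> s powr (q-r)" using assms False S1 by (intro powr_mono2) auto
    finally have h: "2*K/a \<le> s powr (q-r)" .
    have "K * s powr r = (a/2) * (2*K/a) * s powr r" using assms by simp
    also have "\<dots> \<le> (a/2) * s powr (q-r) * s powr r"
      using h assms by (intro mult_right_mono mult_left_mono) auto
    also have "\<dots> = a/2 * s powr q" using sp by (simp add: powr_add[symmetric])
    finally show ?thesis using assms by (smt (verit) powr_ge_zero mult_nonneg_nonneg)
  qed
  then show ?thesis by blast
qed

lemma exp_neg_powr_le:
  fixes b q :: real
  assumes "b > 0" "q > 0"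
  shows "\<exists>D>0. \<forall>s\<ge>0. exp (- (b * s powr q)) \<le> D / (1 + s^2)"
proof -
  define m :: nat where "m = nat \<lceil>2/q\<rceil>"
  have m1: "m \<ge> 1" using assms unfolding m_def
    by (metis Suc_leI divide_pos_pos zero_less_ceiling zero_less_nat_eq zero_less_numeral One_nat_def)
  have qm: "q * m \<ge> 2" using assms unfolding m_def
    by (smt (verit) divide_pos_pos le_divide_eq_numeral1(1) le_nat_iff mult.commute of_nat_nat pos_divide_le_eq real_nat_ceiling_ge)
  define c where "c = (b / m) ^ m"
  have cpos: "c > 0" using assms m1 by (simp add: c_def)
  define D where "D = max 2 (2 / c)"
  have "exp (- (b * s powr q)) \<le> D / (1 + s^2)" if s0: "s \<ge> 0" for s
  proof (cases "s \<le> 1")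
    case True
    have "exp (- (b * s powr q)) \<le> 1" using assms s0 by simp
    also have "1 \<le> 2 / (1 + s^2)" proof -
      have "s^2 \<le> 1" using True s0 by (simp add: power_le_one)
      moreover have "0 < 1 + s^2" by (simp add: add_pos_nonneg)
      ultimately show ?thesis by (simp add: le_divide_eq)
    qed
    also have "\<dots> \<le> D / (1 + s^2)" by (intro divide_right_mono) (auto simp: D_def)
    finally show ?thesis .
  next
    case False
    then have sp: "s > 1" by simp
    let ?x = "b * s powr q"
    have xpos: "?x > 0" using assms sp by simp
    have "exp ?x = exp (?x / m) ^ m" using m1 by (simp add: exp_of_nat_mult[symmetric])
    also have "\<dots> \<ge> (?x / m) ^ m"
      using xpos m1 by (intro power_mono) (auto intro: order_trans[OF _ exp_ge_add_one_self])
    finally have e1: "exp ?x \<ge> (?x/m)^m" .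
    have "(?x/m)^m = (b/m)^m * (s powr q)^m" by (simp add: power_mult_distrib[symmetric])
    also have "(s powr q)^m = s powr (q*m)" using sp by (simp add: powr_powr powr_realpow[symmetric])
    finally have x1: "(?x/m)^m = c * s powr (q*m)" by (simp add: c_def)
    have "s powr (q*m) \<ge> s powr 2" using sp qm by (intro powr_mono) auto
    then have "s powr (q*m) \<ge> s^2" using sp by (simp add: powr_realpow)
    then have "c * s powr (q*m) \<ge> c * s^2" using cpos by (simp add: mult_left_mono)
    then have e2: "exp ?x \<ge> c * s^2" using e1 x1 by linarith
    have "c * s^2 \<ge> c * (1 + s^2) / 2" proof -
      have "1 \<le> s^2" using sp by (simp add: one_le_power)
      then have "c * 1 \<le> c * s^2" using cpos by (intro mult_left_mono) auto
      then show ?thesis by (simp add: algebra_simps)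
    qed
    with e2 have e3: "exp ?x \<ge> c * (1 + s^2) / 2" by linarith
    have "exp (- ?x) = 1 / exp ?x" by (simp add: exp_minus field_simps)
    also have "\<dots> \<le> 1 / (c * (1 + s^2) / 2)" using e3 cpos
      by (intro divide_left_mono) (auto intro!: mult_pos_pos add_pos_nonneg)
    also have "\<dots> = (2/c) / (1 + s^2)" by simp
    also have "\<dots> \<le> D / (1 + s^2)" by (intro divide_right_mono) (auto simp: D_def)
    finally show ?thesis .
  qed
  moreover have "D > 0" by (simp add: D_def)
  ultimately show ?thesis by blast
qed

lemma integrable_inv_sq: "integrable lborel (\<lambda>x::real. inverse (1 + x^2))"
  using integrable_inverse_1_plus_square by (simp add: set_integrable_def einterval_def)

lemma integrable_exp_powr:
  fixes K a r q :: real
  assumes "K \<ge> 0" "a > 0" "0 < r" "r < q"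
  shows "integrable lborel (\<lambda>t. exp (K * \<bar>t\<bar> powr r - a * \<bar>t\<bar> powr q))"
proof -
  obtain C where C: "\<And>s. s \<ge> 0 \<Longrightarrow> K * s powr r \<le> a / 2 * s powr q + C"
    using powr_absorb[OF assms] by blast
  obtain D where D: "D > 0" "\<And>s. s \<ge> 0 \<Longrightarrow> exp (- (a/2 * s powr q)) \<le> D / (1 + s^2)"
    using exp_neg_powr_le[of "a/2" q] assms by auto
  show ?thesis
  proof (rule Bochner_Integration.integrable_bound)
    show "integrable lborel (\<lambda>t. exp C * D * inverse (1 + t^2))"
      using integrable_inv_sq by simp
    show "(\<lambda>t. exp (K * \<bar>t\<bar> powr r - a * \<bar>t\<bar> powr q)) \<in> borel_measurable lborel" by measurable
    show "AE t in lborel. norm (exp (K * \<bar>t\<bar> powr r - a * \<bar>t\<bar> powr q)) \<le> norm (exp C * D * inverse (1 + t^2))"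
    proof (intro AE_I2)
      fix t :: real
      have "K * \<bar>t\<bar> powr r - a * \<bar>t\<bar> powr q \<le> C + (- (a/2 * \<bar>t\<bar> powr q))" using C[of "\<bar>t\<bar>"] by simp
      then have "exp (K * \<bar>t\<bar> powr r - a * \<bar>t\<bar> powr q) \<le> exp C * exp (- (a/2 * \<bar>t\<bar> powr q))"
        by (simp add: exp_add[symmetric])
      also have "\<dots> \<le> exp C * (D / (1 + \<bar>t\<bar>^2))" using D(2)[of "\<bar>t\<bar>"] by (intro mult_left_mono) auto
      finally show "norm (exp (K * \<bar>t\<bar> powr r - a * \<bar>t\<bar> powr q)) \<le> norm (exp C * D * inverse (1 + t^2))"
        using D(1) by (simp add: field_simps)
    qed
  qed
qed


lemma ham_bound:
  fixes I J R r a c q :: real and E :: "'v \<Rightarrow> 'v \<Rightarrow> bool" and W :: "real \<Rightarrow> real \<Rightarrow> real" and V :: "real \<Rightarrow> real"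
  assumes fin: "finite \<Lambda>"
    and fin1: "finite {(x, y). x \<in> \<Lambda> \<and> y \<in> \<Lambda> \<and> E x y}"
    and fin2: "finite {(x, y). x \<in> \<Lambda> \<and> y \<notin> \<Lambda> \<and> E x y}"
    and pos: "I \<ge> 0" "J \<ge> 0" "R \<ge> 0" and rpos: "r > 0"
    and W_bound: "\<And>u v. \<bar>W u v\<bar> \<le> (I + J * (\<bar>u\<bar> powr r + \<bar>v\<bar> powr r)) / 2"
    and V_bound: "\<And>u. V u \<ge> a * \<bar>u\<bar> powr q - c"
    and Rb: "\<And>x y. x \<in> \<Lambda> \<Longrightarrow> y \<notin> \<Lambda> \<Longrightarrow> E x y \<Longrightarrow> \<bar>\<xi> y\<bar> \<le> R"
  shows "- hamiltonian E W V \<Lambda> \<omega> \<xi> \<le>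
     (I * (card {(x, y). x \<in> \<Lambda> \<and> y \<in> \<Lambda> \<and> E x y} + card {(x, y). x \<in> \<Lambda> \<and> y \<notin> \<Lambda> \<and> E x y})
      + card {(x, y). x \<in> \<Lambda> \<and> y \<notin> \<Lambda> \<and> E x y} * J * R powr r + card \<Lambda> * c)
     + J * (card {(x, y). x \<in> \<Lambda> \<and> y \<in> \<Lambda> \<and> E x y} + card {(x, y). x \<in> \<Lambda> \<and> y \<notin> \<Lambda> \<and> E x y})
        * (\<Sum>x\<in>\<Lambda>. \<bar>\<omega> x\<bar> powr r)
     - a * (\<Sum>x\<in>\<Lambda>. \<bar>\<omega> x\<bar> powr q)"
proof -
  define P1 where "P1 = {(x, y). x \<in> \<Lambda> \<and> y \<in> \<Lambda> \<and> E x y}"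
  define P2 where "P2 = {(x, y). x \<in> \<Lambda> \<and> y \<notin> \<Lambda> \<and> E x y}"
  define S where "S = (\<Sum>x\<in>\<Lambda>. \<bar>\<omega> x\<bar> powr r)"
  define Q where "Q = (\<Sum>x\<in>\<Lambda>. \<bar>\<omega> x\<bar> powr q)"
  have Sle: "\<bar>\<omega> x\<bar> powr r \<le> S" if "x \<in> \<Lambda>" for x
    unfolding S_def using fin that by (intro member_le_sum) auto
  have S0: "S \<ge> 0" unfolding S_def by (simp add: sum_nonneg)
  define A where "A = (\<Sum>(x, y)\<in>P1. W (\<omega> x) (\<omega> y))"
  define B where "B = (\<Sum>(x, y)\<in>P2. W (\<omega> x) (\<xi> y))"
  define Vs where "Vs = (\<Sum>x\<in>\<Lambda>. V (\<omega> x))"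
  have H: "hamiltonian E W V \<Lambda> \<omega> \<xi> = A / 2 + B + Vs"
    by (simp add: hamiltonian_def A_def B_def Vs_def P1_def P2_def)
  have "\<bar>A\<bar> \<le> (\<Sum>p\<in>P1. \<bar>W (\<omega> (fst p)) (\<omega> (snd p))\<bar>)"
    unfolding A_def by (simp add: split_def sum_abs)
  also have "\<dots> \<le> (\<Sum>p\<in>P1. (I + J * (S + S)) / 2)"
  proof (rule sum_mono)
    fix p assume "p \<in> P1"
    then have "fst p \<in> \<Lambda>" "snd p \<in> \<Lambda>" by (auto simp: P1_def)
    then have "J * (\<bar>\<omega> (fst p)\<bar> powr r + \<bar>\<omega> (snd p)\<bar> powr r) \<le> J * (S + S)"
      using Sle pos by (intro mult_left_mono add_mono) auto
    then show "\<bar>W (\<omega> (fst p)) (\<omega> (snd p))\<bar> \<le> (I + J * (S + S)) / 2"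
      using W_bound[of "\<omega> (fst p)" "\<omega> (snd p)"] by (smt (verit) divide_right_mono)
  qed
  finally have A1: "\<bar>A\<bar> \<le> card P1 * ((I + J * (S + S)) / 2)" by simp
  have "\<bar>B\<bar> \<le> (\<Sum>p\<in>P2. \<bar>W (\<omega> (fst p)) (\<xi> (snd p))\<bar>)"
    unfolding B_def by (simp add: split_def sum_abs)
  also have "\<dots> \<le> (\<Sum>p\<in>P2. (I + J * (S + R powr r)) / 2)"
  proof (rule sum_mono)
    fix p assume "p \<in> P2"
    then have "fst p \<in> \<Lambda>" "\<bar>\<xi> (snd p)\<bar> \<le> R" using Rb by (auto simp: P2_def)
    then have "J * (\<bar>\<omega> (fst p)\<bar> powr r + \<bar>\<xi> (snd p)\<bar> powr r) \<le> J * (S + R powr r)"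
      using Sle pos rpos by (intro mult_left_mono add_mono powr_mono2) auto
    then show "\<bar>W (\<omega> (fst p)) (\<xi> (snd p))\<bar> \<le> (I + J * (S + R powr r)) / 2"
      using W_bound[of "\<omega> (fst p)" "\<xi> (snd p)"] by (smt (verit) divide_right_mono)
  qed
  finally have B1: "\<bar>B\<bar> \<le> card P2 * ((I + J * (S + R powr r)) / 2)" by simp
  have "Vs \<ge> (\<Sum>x\<in>\<Lambda>. a * \<bar>\<omega> x\<bar> powr q - c)"
    unfolding Vs_def by (intro sum_mono V_bound)
  then have V1: "Vs \<ge> a * Q - card \<Lambda> * c"
    by (simp add: Q_def sum_subtractf sum_distrib_left)
  have n1: "real (card P1) \<ge> 0" and n2: "real (card P2) \<ge> 0" by auto
  have p1: "card P1 * ((I + J * (S + S)) / 2) \<le> I * card P1 + J * card P1 * S"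
    using n1 pos S0 by (simp add: field_simps mult_nonneg_nonneg)
  have p2: "card P2 * ((I + J * (S + R powr r)) / 2) \<le> I * card P2 + card P2 * J * R powr r + J * card P2 * S"
    using n2 pos S0 by (simp add: field_simps mult_nonneg_nonneg)
  have "- hamiltonian E W V \<Lambda> \<omega> \<xi> \<le> \<bar>A\<bar> + \<bar>B\<bar> - Vs" using H by linarith
  also have "\<dots> \<le> (I * (card P1 + card P2) + card P2 * J * R powr r + card \<Lambda> * c)
     + J * (card P1 + card P2) * S - a * Q"
    using A1 B1 V1 p1 p2 by (simp add: algebra_simps)
  finally show ?thesis by (simp add: P1_def P2_def S_def Q_def)
qed


lemma cont_W:
  fixes W :: "real \<Rightarrow> real \<Rightarrow> real" and a b :: "'x::topological_space \<Rightarrow> real"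
  assumes W: "continuous_on UNIV (\<lambda>(u, v). W u v)" and "continuous_on UNIV a" "continuous_on UNIV b"
  shows "continuous_on UNIV (\<lambda>\<omega>. W (a \<omega>) (b \<omega>))"
proof -
  have "continuous_on UNIV ((\<lambda>(u, v). W u v) \<circ> (\<lambda>\<omega>. (a \<omega>, b \<omega>)))"
    by (rule continuous_on_compose[OF continuous_on_Pair[OF assms(2,3)]])
       (rule continuous_on_subset[OF W], simp)
  then show ?thesis by (simp add: o_def)
qed

lemma cont_V:
  fixes V :: "real \<Rightarrow> real" and a :: "'x::topological_space \<Rightarrow> real"
  assumes "continuous_on UNIV V" "continuous_on UNIV a"
  shows "continuous_on UNIV (\<lambda>\<omega>. V (a \<omega>))"
  using continuous_on_compose[OF assms(2) continuous_on_subset[OF assms(1)]] by (simp add: o_def)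

lemma ham_cont_omega:
  assumes W: "continuous_on UNIV (\<lambda>(u, v). W u v)" and V: "continuous_on UNIV V"
  shows "continuous_on UNIV (\<lambda>\<omega>. hamiltonian E W V \<Lambda> \<omega> \<xi>)"
  unfolding hamiltonian_def split_def
  by (intro continuous_intros cont_W[OF W] cont_V[OF V] continuous_on_product_coordinates) auto

lemma ham_cont_xi:
  assumes W: "continuous_on UNIV (\<lambda>(u, v). W u v)" and V: "continuous_on UNIV V"
  shows "continuous_on UNIV (\<lambda>\<xi>. hamiltonian E W V \<Lambda> \<omega> \<xi>)"
  unfolding hamiltonian_def split_def
  by (intro continuous_intros cont_W[OF W] cont_V[OF V] continuous_on_product_coordinates)

lemma concat_cont_omega: "continuous_on UNIV (\<lambda>\<omega>. concat_cfg \<Lambda> \<omega> \<xi>)"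
  unfolding concat_cfg_def
  by (intro continuous_on_coordinatewise_then_product, case_tac "i \<in> \<Lambda>", auto)

lemma concat_cont_xi: "continuous_on UNIV (\<lambda>\<xi>. concat_cfg \<Lambda> \<omega> \<xi>)"
  unfolding concat_cfg_def
  by (intro continuous_on_coordinatewise_then_product, case_tac "i \<in> \<Lambda>", auto)

lemma quot_bound:
  fixes h g :: "'a \<Rightarrow> real"
  assumes g0: "\<And>x. g x \<ge> 0" and hb: "\<And>x. \<bar>h x\<bar> \<le> B * g x" and B0: "B \<ge> 0"
  shows "\<bar>integral\<^sup>L M h / integral\<^sup>L M g\<bar> \<le> B"
proof (cases "integral\<^sup>L M g = 0")
  case True then show ?thesis using B0 by simp
next
  case False
  then have gi: "integrable M g" using not_integrable_integral_eq by blast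
  have gp: "integral\<^sup>L M g > 0" using False Bochner_Integration.integral_nonneg[of M g] g0 by (simp add: order_less_le)
  have "\<bar>integral\<^sup>L M h\<bar> \<le> B * integral\<^sup>L M g"
  proof (cases "integrable M h")
    case True
    have "\<bar>integral\<^sup>L M h\<bar> \<le> integral\<^sup>L M (\<lambda>x. \<bar>h x\<bar>)" using integral_norm_bound[of M h] by simp
    also have "\<dots> \<le> integral\<^sup>L M (\<lambda>x. B * g x)"
      using True gi hb by (intro integral_mono) auto
    finally show ?thesis by simp
  next
    case False
    then show ?thesis using not_integrable_integral_eq[OF False] B0 gp by simp
  qed
  then show ?thesis using gp by (simp add: divide_le_eq abs_divide)
qed


theorem lemma4p4:
  fixes E :: "'v \<Rightarrow> 'v \<Rightarrow> bool" and o\<^sub>0 :: 'v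
    and \<theta> I\<^sub>W J\<^sub>W r a\<^sub>V c\<^sub>V q :: real
    and W :: "real \<Rightarrow> real \<Rightarrow> real" and V :: "real \<Rightarrow> real"
    and \<Lambda> :: "'v set" and f :: "('v \<Rightarrow> real) \<Rightarrow> real"
  assumes graph: "graph_ok E"
    and theta_pos: "\<theta> > 0"
    and Theta_fin: "\<exists>\<alpha>>0. Theta_finite E o\<^sub>0 \<alpha> \<theta>"
    and W_cont: "continuous_on UNIV (\<lambda>(u, v). W u v)"
    and W_sym: "\<And>u v. W u v = W v u"
    and consts_pos: "I\<^sub>W > 0" "J\<^sub>W > 0" "r > 0"
    and W_bound: "\<And>u v. \<bar>W u v\<bar> \<le> (I\<^sub>W + J\<^sub>W * (\<bar>u\<bar> powr r + \<bar>v\<bar> powr r)) / 2"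
    and V_cont: "continuous_on UNIV V"
    and V_consts: "a\<^sub>V > 0" "c\<^sub>V > 0"
    and V_bound: "\<And>u. V u \<ge> a\<^sub>V * \<bar>u\<bar> powr q - c\<^sub>V"
    and q_big: "q > r + r / \<theta>"
    and Lambda: "finite \<Lambda>" "\<Lambda> \<noteq> {}"
    and f_cont: "continuous_on UNIV f"
    and f_bdd: "bounded (range f)"
  shows "bounded (range (local_gibbs E W V \<Lambda> f))
         \<and> continuous_on UNIV (local_gibbs E W V \<Lambda> f)"
proof -
  let ?M = "PiM \<Lambda> (\<lambda>_::'v. lborel :: real measure)"
  let ?H = "\<lambda>\<xi> \<omega>. hamiltonian E W V \<Lambda> \<omega> \<xi>"
  define P1 where "P1 = {(x, y). x \<in> \<Lambda> \<and> y \<in> \<Lambda> \<and> E x y}"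
  define P2 where "P2 = {(x, y). x \<in> \<Lambda> \<and> y \<notin> \<Lambda> \<and> E x y}"
  have lf: "\<And>x. finite {y. E x y}" using graph by (simp add: graph_ok_def)
  have cnt: "countable (UNIV :: 'v set)" using graph by (simp add: graph_ok_def)
  have fin1: "finite P1"
    by (rule finite_subset[of _ "\<Lambda> \<times> \<Lambda>"]) (auto simp: P1_def Lambda)
  have fin2: "finite P2"
    by (rule finite_subset[of _ "Sigma \<Lambda> (\<lambda>x. {y. E x y})"]) (auto simp: P2_def Lambda lf)
  have qr: "q > r" using q_big theta_pos consts_pos by (smt (verit) divide_pos_pos)
  obtain Mf where Mf: "\<And>\<omega>. \<bar>f \<omega>\<bar> \<le> Mf" "Mf \<ge> 0"
  proof -
    obtain a where "\<forall>x\<in>range f. norm x \<le> a" using f_bdd by (auto simp: bounded_iff)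
    then have "\<And>\<omega>. \<bar>f \<omega>\<bar> \<le> max a 0" by (metis rangeI real_norm_def max.coboundedI1)
    then show ?thesis using that[of "max a 0"] by simp
  qed
  have LG: "local_gibbs E W V \<Lambda> f \<xi> =
      (\<integral>\<omega>. f (concat_cfg \<Lambda> \<omega> \<xi>) * exp (- ?H \<xi> \<omega>) \<partial>?M) / (\<integral>\<omega>. exp (- ?H \<xi> \<omega>) \<partial>?M)" for \<xi>
    by (simp add: local_gibbs_def partition_fn_def)
  have bdd: "bounded (range (local_gibbs E W V \<Lambda> f))"
    unfolding bounded_iff
  proof (intro exI ballI)
    fix z assume "z \<in> range (local_gibbs E W V \<Lambda> f)"
    then obtain \<xi> where z: "z = local_gibbs E W V \<Lambda> f \<xi>" by auto
    show "norm z \<le> Mf" unfolding z LG real_norm_def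
    proof (rule quot_bound)
      fix \<omega>
      show "\<bar>f (concat_cfg \<Lambda> \<omega> \<xi>) * exp (- ?H \<xi> \<omega>)\<bar> \<le> Mf * exp (- ?H \<xi> \<omega>)"
        using Mf(1) by (simp add: abs_mult mult_right_mono)
    qed (auto simp: Mf)
  qed
  have cont: "continuous_on UNIV (local_gibbs E W V \<Lambda> f)"
  proof (rule seq_cont_countable[OF cnt])
    fix X :: "nat \<Rightarrow> 'v \<Rightarrow> real" and \<xi> assume X: "X \<longlonglongrightarrow> \<xi>"
    have coord: "(\<lambda>n. X n y) \<longlonglongrightarrow> \<xi> y" for y
      using continuous_on_tendsto_compose[OF continuous_on_product_coordinates X, of y] by simp
    have "\<forall>y\<in>snd ` P2. \<exists>K>0. \<forall>n. \<bar>X n y\<bar> \<le> K"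
      using coord by (metis Bseq_def convergentI convergent_imp_Bseq real_norm_def)
    then obtain Ky where Ky: "\<And>y. y \<in> snd ` P2 \<Longrightarrow> Ky y > 0 \<and> (\<forall>n. \<bar>X n y\<bar> \<le> Ky y)"
      by metis
    define R where "R = (\<Sum>y\<in>snd ` P2. Ky y)"
    have R0: "R \<ge> 0" unfolding R_def using Ky by (intro sum_nonneg) (auto intro: less_imp_le)
    have RX: "\<bar>X n y\<bar> \<le> R" if "x \<in> \<Lambda>" "y \<notin> \<Lambda>" "E x y" for n x y
    proof -
      have y: "y \<in> snd ` P2" using that by (force simp: P2_def)
      have "\<bar>X n y\<bar> \<le> Ky y" using Ky[OF y] by blast
      also have "Ky y \<le> R" unfolding R_def using fin2 y Ky
        by (intro member_le_sum) (auto intro: less_imp_le)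
      finally show ?thesis .
    qed
    define K' where "K' = J\<^sub>W * (card P1 + card P2)"
    define Kc where "Kc = I\<^sub>W * (card P1 + card P2) + card P2 * J\<^sub>W * R powr r + card \<Lambda> * c\<^sub>V"
    define g where "g = (\<lambda>t::real. exp (K' * \<bar>t\<bar> powr r - a\<^sub>V * \<bar>t\<bar> powr q))"
    have K'0: "K' \<ge> 0" unfolding K'_def using consts_pos by simp
    have gint: "integrable lborel g"
      unfolding g_def using integrable_exp_powr[OF K'0 V_consts(1) consts_pos(3) qr] .
    interpret product_sigma_finite "\<lambda>_::'v. lborel" by standard
    have wint: "integrable ?M (\<lambda>\<omega>. \<Prod>x\<in>\<Lambda>. g (\<omega> x))"
      using product_integrable_prod[OF Lambda(1), of "\<lambda>_. g"] gint by simp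
    have hb: "exp (- ?H (X n) \<omega>) \<le> exp Kc * (\<Prod>x\<in>\<Lambda>. g (\<omega> x))" for n \<omega>
    proof -
      have "- ?H (X n) \<omega> \<le> Kc + K' * (\<Sum>x\<in>\<Lambda>. \<bar>\<omega> x\<bar> powr r) - a\<^sub>V * (\<Sum>x\<in>\<Lambda>. \<bar>\<omega> x\<bar> powr q)"
        unfolding Kc_def K'_def P1_def P2_def
        by (rule ham_bound[OF Lambda(1) fin1[unfolded P1_def] fin2[unfolded P2_def] _ _ R0 consts_pos(3) W_bound V_bound RX])
           (use consts_pos in auto)
      also have "\<dots> = Kc + (\<Sum>x\<in>\<Lambda>. K' * \<bar>\<omega> x\<bar> powr r - a\<^sub>V * \<bar>\<omega> x\<bar> powr q)"
        by (simp add: sum_subtractf sum_distrib_left)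
      finally have "exp (- ?H (X n) \<omega>) \<le> exp (Kc + (\<Sum>x\<in>\<Lambda>. K' * \<bar>\<omega> x\<bar> powr r - a\<^sub>V * \<bar>\<omega> x\<bar> powr q))"
        by simp
      also have "\<dots> = exp Kc * (\<Prod>x\<in>\<Lambda>. g (\<omega> x))"
        using Lambda(1) by (simp add: exp_add exp_sum g_def)
      finally show ?thesis .
    qed
    have DCT: "integrable ?M (\<lambda>\<omega>. c (concat_cfg \<Lambda> \<omega> \<xi>) * exp (- ?H \<xi> \<omega>)) \<and>
       (\<lambda>n. \<integral>\<omega>. c (concat_cfg \<Lambda> \<omega> (X n)) * exp (- ?H (X n) \<omega>) \<partial>?M)
         \<longlonglongrightarrow> (\<integral>\<omega>. c (concat_cfg \<Lambda> \<omega> \<xi>) * exp (- ?H \<xi> \<omega>) \<partial>?M)"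
      if cc: "continuous_on UNIV c" and cb: "\<And>\<omega>. \<bar>c \<omega>\<bar> \<le> Mc" for c :: "('v \<Rightarrow> real) \<Rightarrow> real" and Mc
    proof -
      have meas: "(\<lambda>\<omega>. c (concat_cfg \<Lambda> \<omega> \<zeta>) * exp (- ?H \<zeta> \<omega>)) \<in> borel_measurable ?M" for \<zeta>
        by (rule meas_of_cont[OF Lambda(1)])
           (intro continuous_intros continuous_on_compose2[OF cc concat_cont_omega]
              ham_cont_omega[OF W_cont V_cont], auto)
      have lim: "(\<lambda>n. c (concat_cfg \<Lambda> \<omega> (X n)) * exp (- ?H (X n) \<omega>))
          \<longlonglongrightarrow> c (concat_cfg \<Lambda> \<omega> \<xi>) * exp (- ?H \<xi> \<omega>)" for \<omega>
      proof -
        have c1: "continuous_on UNIV (\<lambda>\<zeta>. c (concat_cfg \<Lambda> \<omega> \<zeta>) * exp (- ?H \<zeta> \<omega>))"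
          by (intro continuous_intros continuous_on_compose2[OF cc concat_cont_xi]
              ham_cont_xi[OF W_cont V_cont], auto)
        show ?thesis using continuous_on_tendsto_compose[OF c1 X] by simp
      qed
      have bnd: "norm (c (concat_cfg \<Lambda> \<omega> (X n)) * exp (- ?H (X n) \<omega>))
          \<le> Mc * (exp Kc * (\<Prod>x\<in>\<Lambda>. g (\<omega> x)))" for n \<omega>
      proof -
        have "norm (c (concat_cfg \<Lambda> \<omega> (X n)) * exp (- ?H (X n) \<omega>))
            = \<bar>c (concat_cfg \<Lambda> \<omega> (X n))\<bar> * exp (- ?H (X n) \<omega>)" by (simp add: abs_mult)
        also have "\<dots> \<le> Mc * exp (- ?H (X n) \<omega>)" using cb by (simp add: mult_right_mono)
        also have "\<dots> \<le> Mc * (exp Kc * (\<Prod>x\<in>\<Lambda>. g (\<omega> x)))"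
          using hb[of \<omega> n] cb[of \<omega>] by (intro mult_left_mono) (auto intro: order_trans[OF abs_ge_zero])
        finally show ?thesis .
      qed
      have wi: "integrable ?M (\<lambda>\<omega>. Mc * (exp Kc * (\<Prod>x\<in>\<Lambda>. g (\<omega> x))))"
        using wint by simp
      show ?thesis
        using integrable_dominated_convergence[OF meas meas wi, of "\<lambda>n. X n"]
          integral_dominated_convergence[OF meas meas wi, of "\<lambda>n. X n"] lim bnd
        by auto
    qed
    note D1 = DCT[OF f_cont Mf(1)]
    note D2 = DCT[of "\<lambda>_. 1" 1, simplified]
    have Zpos: "(\<integral>\<omega>. exp (- ?H \<xi> \<omega>) \<partial>?M) \<noteq> 0"
    proof
      assume "(\<integral>\<omega>. exp (- ?H \<xi> \<omega>) \<partial>?M) = 0"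
      then have "AE \<omega> in ?M. exp (- ?H \<xi> \<omega>) = 0"
        using integral_nonneg_eq_0_iff_AE[of ?M "\<lambda>\<omega>. exp (- ?H \<xi> \<omega>)"] D2 by auto
      then have "AE \<omega> in ?M. False" by (rule AE_mp) simp
      then have e0: "emeasure ?M (space ?M) = 0" by (metis ae_filter_eq_bot_iff trivial_limit_def)
      have "emeasure ?M (space ?M) = emeasure ?M (Pi\<^sub>E \<Lambda> (\<lambda>_. UNIV))" by (simp add: space_PiM)
      also have "\<dots> = (\<Prod>i\<in>\<Lambda>. emeasure lborel (UNIV :: real set))"
        using emeasure_PiM[OF Lambda(1), of "\<lambda>_. UNIV"] by simp
      finally show False using e0 Lambda by simp
    qed
    show "(\<lambda>n. local_gibbs E W V \<Lambda> f (X n)) \<longlonglongrightarrow> local_gibbs E W V \<Lambda> f \<xi>"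
      unfolding LG using tendsto_divide[OF conjunct2[OF D1] conjunct2[OF D2] Zpos] by simp
  qed
  show ?thesis using bdd cont by blast
qed

end
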